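(* Let $d\in\mathbb{N}$, let $\Omega\subset\mathbb{R}^d$ be a bounded domain, $\alpha\in(0,1)$, $\phi\in C_c^\infty(\Omega;\mathbb{R}^d)$, and $f_t\coloneqq I+t\phi$, where $\varepsilon>0$ is such that $(f_t)_{t\in(-\varepsilon,\varepsilon)}$ is a local variation in $\Omega$. Then there exist $0<\varepsilon_0<\varepsilon$ and $L>0$ such that for all $t\in(-\varepsilon_0,\varepsilon_0)$ and all measurable sets $E,F\subset\Omega$ with $P_\alpha(E)<\infty$, \[ |\lambda(f_t(E)\cap F)-\lambda(E\cap F)|\le L|t|^\alpha P_\alpha(E), \] and in particular $\lambda(f_t(E)\mathbin{\triangle}E)\le L|t|^\alpha P_\alpha(E)$.
   Context: $I$ denotes the identity map on $\mathbb{R}^d$, $\lambda$ the Lebesgue measure, $\mathbin{\triangle}$ the symmetric difference. For measurable $E\subset\mathbb{R}^d$, $P_\alpha(E)\coloneqq\int_{\mathbb{R}^d}\int_{\mathbb{R}^d}\frac{|\chi_E(x)-\chi_E(y)|}{|x-y|^{d+\alpha}}\,\mathrm{d}x\,\mathrm{d}y$. A local variation in $\Omega$ is a smooth map $(t,x)\mapsto f_t(x)$ on $(-\varepsilon,\varepsilon)\times\mathbb{R}^d$ with each $f_t$ a diffeomorphism of $\mathbb{R}^d$, $f_0=I$, and $\{x:f_t(x)\neq x\}$ contained in a fixed compact subset of $\Omega$ for all $t$; for $\phi\in C_c^\infty(\Omega;\mathbb{R}^d)$, $I+t\phi$ is such a local variation for some $\varepsilon>0$. *)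

theory Defs
  imports "HOL-Analysis.Analysis"
begin

primrec Ck_on :: "'a::euclidean_space set \<Rightarrow> nat \<Rightarrow> ('a \<Rightarrow> 'b::euclidean_space) \<Rightarrow> bool" where
  "Ck_on S 0 f = continuous_on S f"
| "Ck_on S (Suc k) f =
     ((\<forall>x\<in>S. f differentiable (at x)) \<and>
      (\<forall>v. Ck_on S k (\<lambda>x. frechet_derivative f (at x) v)))"

definition smooth_on :: "'a::euclidean_space set \<Rightarrow> ('a \<Rightarrow> 'b::euclidean_space) \<Rightarrow> bool" where
  "smooth_on S f \<longleftrightarrow> (\<forall>k. Ck_on S k f)"

definition Cc_infty :: "'a::euclidean_space set \<Rightarrow> ('a \<Rightarrow> 'a) \<Rightarrow> bool" where
  "Cc_infty \<Omega> \<phi> \<longleftrightarrow> smooth_on UNIV \<phi> \<and>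
     compact (closure {x. \<phi> x \<noteq> 0}) \<and> closure {x. \<phi> x \<noteq> 0} \<subseteq> \<Omega>"

definition diffeomorphism :: "('a::euclidean_space \<Rightarrow> 'a) \<Rightarrow> bool" where
  "diffeomorphism g \<longleftrightarrow> bij g \<and> smooth_on UNIV g \<and> smooth_on UNIV (inv g)"

definition local_variation :: "real \<Rightarrow> 'a::euclidean_space set \<Rightarrow> (real \<Rightarrow> 'a \<Rightarrow> 'a) \<Rightarrow> bool" where
  "local_variation \<epsilon> \<Omega> f \<longleftrightarrow>
     \<epsilon> > 0 \<and>
     smooth_on ({-\<epsilon><..<\<epsilon>} \<times> UNIV) (\<lambda>p. f (fst p) (snd p)) \<and>
     (\<forall>t\<in>{-\<epsilon><..<\<epsilon>}. diffeomorphism (f t)) \<and>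
     f 0 = id \<and>
     (\<exists>K. compact K \<and> K \<subseteq> \<Omega> \<and> (\<forall>t\<in>{-\<epsilon><..<\<epsilon>}. {x. f t x \<noteq> x} \<subseteq> K))"

definition frac_perimeter :: "real \<Rightarrow> 'a::euclidean_space set \<Rightarrow> ennreal" where
  "frac_perimeter \<alpha> E =
     (\<integral>\<^sup>+ x. (\<integral>\<^sup>+ y. ennreal (\<bar>indicator E x - indicator E y\<bar> /
         norm (x - y) powr (real DIM('a) + \<alpha>)) \<partial>lebesgue) \<partial>lebesgue)"

end

theory Submission
  imports Defs
begin

lemma emeasure_UN_countable_le:
  assumes I: "countable I" and X: "\<And>i. i \<in> I \<Longrightarrow> X i \<in> sets M"
  shows "emeasure M (\<Union>(X ` I)) \<le> (\<integral>\<^sup>+i. emeasure M (X i) \<partial>count_space I)"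
proof -
  have U: "\<Union>(X ` I) \<in> sets M" using I X by (intro sets.countable_UN') auto
  have "emeasure M (\<Union>(X ` I)) = (\<integral>\<^sup>+x. indicator (\<Union>(X ` I)) x \<partial>M)"
    using U by simp
  also have "\<dots> \<le> (\<integral>\<^sup>+x. \<integral>\<^sup>+i. indicator (X i) x \<partial>count_space I \<partial>M)"
  proof (rule nn_integral_mono)
    fix x
    show "indicator (\<Union>(X ` I)) x \<le> (\<integral>\<^sup>+i. indicator (X i) x \<partial>count_space I :: ennreal)"
    proof (cases "x \<in> \<Union>(X ` I)")
      case True
      then obtain j where j: "j \<in> I" "x \<in> X j" by auto
      have "(indicator (X j) x :: ennreal) \<le> (\<integral>\<^sup>+i. indicator (X i) x \<partial>count_space I)"
        by (rule nn_integral_ge_point[OF j(1)])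
      with True j show ?thesis by simp
    qed simp
  qed
  also have "\<dots> = (\<integral>\<^sup>+i. \<integral>\<^sup>+x. indicator (X i) x \<partial>M \<partial>count_space I)"
    using I X by (intro nn_integral_count_space_nn_integral) auto
  also have "\<dots> = (\<integral>\<^sup>+i. emeasure M (X i) \<partial>count_space I)"
    using X by (intro nn_integral_cong) simp
  finally show ?thesis .
qed

lemma lip_image_emeasure:
  fixes f :: "'a::euclidean_space \<Rightarrow> 'a"
  assumes lip: "\<And>x y. norm (f x - f y) \<le> L * norm (x - y)" and L: "0 < L"
    and S: "S \<in> sets lebesgue"
  shows "emeasure lebesgue (f ` S) \<le> ennreal (L ^ DIM('a)) * emeasure lebesgue S"
proof (cases "emeasure lebesgue S = \<infinity>")
  case True
  then show ?thesis using L by (simp add: ennreal_mult_top)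
next
  case False
  have Lpos: "0 < L ^ DIM('a)" using L by simp
  have key: "emeasure lebesgue (f ` S) \<le> ennreal (L ^ DIM('a)) * (emeasure lebesgue S + ennreal e)"
    if e: "0 < e" for e
  proof -
    obtain T where T: "open T" "S \<subseteq> T" "(T - S) \<in> lmeasurable" "emeasure lebesgue (T - S) < ennreal e"
      using sets_lebesgue_outer_open[OF S e] by blast
    have Tm: "T \<in> sets lebesgue" using T(1) by (simp add: borel_open)
    have TS: "T = S \<union> (T - S)" using T(2) by blast
    have eT: "emeasure lebesgue T \<le> emeasure lebesgue S + ennreal e"
    proof -
      have "emeasure lebesgue T \<le> emeasure lebesgue S + emeasure lebesgue (T - S)"
        using emeasure_subadditive[OF S, of "T - S"] T(3) TS by (metis fmeasurableD)
      also have "\<dots> \<le> emeasure lebesgue S + ennreal e"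
        using T(4) by (intro add_left_mono) simp
      finally show ?thesis .
    qed
    define K where "K = {(a::'a, r::real). 0 < r \<and> ball a r \<subseteq> T}"
    have cov: "\<exists>i. i \<in> K \<and> x \<in> ball (fst i) (snd i) \<and> snd i < d" if "x \<in> S" "0 < d" for x d
    proof -
      have xT: "x \<in> T" using that(1) T(2) by blast
      obtain r where r: "0 < r" "ball x r \<subseteq> T" by (rule openE[OF T(1) xT])
      have "ball x (min (d/2) r) \<subseteq> T" by (rule order_trans[OF _ r(2)]) (simp add: subset_ball)
      moreover have "x \<in> ball x (min (d/2) r)" "min (d/2) r < d" "0 < min (d/2) r" using r(1) that(2) by auto
      ultimately show ?thesis
        by (intro exI[of _ "(x, min (d/2) r)"]) (simp add: K_def)
    qed
    obtain C where C: "countable C" "C \<subseteq> K"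
      "pairwise (\<lambda>i j. disjnt (ball (fst i) (snd i)) (ball (fst j) (snd j))) C"
      "negligible (S - (\<Union>i \<in> C. ball (fst i) (snd i)))"
      by (rule Vitali_covering_theorem_balls[of S K fst snd, OF cov])
    define N where "N = S - (\<Union>i \<in> C. ball (fst i) (snd i))"
    have fN: "negligible (f ` N)"
    proof (rule negligible_locally_Lipschitz_image)
      show "DIM('a) \<le> DIM('a)" by simp
      show "negligible N" using C(4) by (simp add: N_def)
      fix x assume "x \<in> N"
      show "\<exists>T B. open T \<and> x \<in> T \<and> (\<forall>y\<in>N \<inter> T. norm (f y - f x) \<le> B * norm (y - x))"
        using lip by (intro exI[of _ UNIV] exI[of _ L]) auto
    qed
    define U2 where "U2 = (\<Union>i \<in> C. ball (f (fst i)) (L * snd i))"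
    have sub: "f ` S \<subseteq> f ` N \<union> U2"
    proof
      fix y assume "y \<in> f ` S"
      then obtain x where x: "x \<in> S" "y = f x" by auto
      show "y \<in> f ` N \<union> U2"
      proof (cases "x \<in> N")
        case False
        then obtain i where i: "i \<in> C" "x \<in> ball (fst i) (snd i)" using x by (auto simp: N_def)
        have "norm (f (fst i) - f x) \<le> L * norm (fst i - x)" by (rule lip)
        also have "\<dots> < L * snd i" using i(2) L by (simp add: dist_norm)
        finally have "y \<in> ball (f (fst i)) (L * snd i)" using x by (simp add: dist_norm)
        then show ?thesis using i by (auto simp: U2_def)
      qed (use x in auto)
    qed
    have fNm: "f ` N \<in> null_sets lebesgue" using fN by (simp add: negligible_iff_null_sets)
    have U2m: "U2 \<in> sets lebesgue" unfolding U2_def by (simp add: borel_open open_UN)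
    have "emeasure lebesgue (f ` S) \<le> emeasure lebesgue (f ` N \<union> U2)"
      using sub fNm U2m by (intro emeasure_mono) auto
    also have "\<dots> \<le> emeasure lebesgue (f ` N) + emeasure lebesgue U2"
      using fNm U2m by (intro emeasure_subadditive) auto
    also have "\<dots> = emeasure lebesgue U2" using null_setsD1[OF fNm] by simp
    also have "\<dots> \<le> (\<integral>\<^sup>+i. emeasure lebesgue (ball (f (fst i)) (L * snd i)) \<partial>count_space C)"
      unfolding U2_def using C(1) by (intro emeasure_UN_countable_le) auto
    also have "\<dots> = (\<integral>\<^sup>+i. ennreal (L ^ DIM('a)) * emeasure lebesgue (ball (fst i) (snd i)) \<partial>count_space C)"
    proof (intro nn_integral_cong)
      fix i assume "i \<in> space (count_space C)"
      then have "i \<in> K" using C(2) by auto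
      then have r: "0 < snd i" by (auto simp: K_def)
      have "emeasure lebesgue (ball (f (fst i)) (L * snd i)) =
          ennreal ((L * snd i) ^ DIM('a)) * emeasure lebesgue (ball (0::'a) 1)"
        using r L by (intro emeasure_lebesgue_ball_conv_unit_ball) simp
      also have "\<dots> = ennreal (L ^ DIM('a)) * (ennreal (snd i ^ DIM('a)) * emeasure lebesgue (ball (0::'a) 1))"
        using r L by (simp add: power_mult_distrib ennreal_mult mult.assoc)
      also have "\<dots> = ennreal (L ^ DIM('a)) * emeasure lebesgue (ball (fst i) (snd i))"
        using r by (subst emeasure_lebesgue_ball_conv_unit_ball) auto
      finally show "emeasure lebesgue (ball (f (fst i)) (L * snd i)) =
          ennreal (L ^ DIM('a)) * emeasure lebesgue (ball (fst i) (snd i))" .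
    qed
    also have "\<dots> = ennreal (L ^ DIM('a)) * (\<integral>\<^sup>+i. emeasure lebesgue (ball (fst i) (snd i)) \<partial>count_space C)"
      by (rule nn_integral_cmult) simp
    also have "(\<integral>\<^sup>+i. emeasure lebesgue (ball (fst i) (snd i)) \<partial>count_space C) =
        emeasure lebesgue (\<Union>i \<in> C. ball (fst i) (snd i))"
    proof (rule emeasure_UN_countable[symmetric])
      show "disjoint_family_on (\<lambda>i. ball (fst i) (snd i)) C"
        using C(3) unfolding disjoint_family_on_def pairwise_def disjnt_def by blast
    qed (use C(1) in auto)
    also have "emeasure lebesgue (\<Union>i \<in> C. ball (fst i) (snd i)) \<le> emeasure lebesgue T"
    proof (rule emeasure_mono[OF _ Tm])
      show "(\<Union>i \<in> C. ball (fst i) (snd i)) \<subseteq> T"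
      proof
        fix x assume "x \<in> (\<Union>i \<in> C. ball (fst i) (snd i))"
        then obtain i where "i \<in> C" "x \<in> ball (fst i) (snd i)" by blast
        moreover from this(1) C(2) have "i \<in> K" by blast
        then have "ball (fst i) (snd i) \<subseteq> T" by (cases i) (simp add: K_def)
        ultimately show "x \<in> T" by blast
      qed
    qed
    finally show ?thesis
      using eT by (meson dual_order.trans mult_left_mono zero_le)
  qed
  show ?thesis
  proof (rule ennreal_le_epsilon)
    fix e :: real assume e: "0 < e"
    have "emeasure lebesgue (f ` S) \<le> ennreal (L ^ DIM('a)) * (emeasure lebesgue S + ennreal (e / L ^ DIM('a)))"
      using key[of "e / L ^ DIM('a)"] e Lpos by simp
    also have "\<dots> = ennreal (L ^ DIM('a)) * emeasure lebesgue S + ennreal e"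
    proof -
      have "ennreal (L ^ DIM('a)) * ennreal (e / L ^ DIM('a)) = ennreal e"
        using Lpos e L by (subst ennreal_mult[symmetric]) auto
      then show ?thesis by (simp add: distrib_left)
    qed
    finally show "emeasure lebesgue (f ` S) \<le> ennreal (L ^ DIM('a)) * emeasure lebesgue S + ennreal e" .
  qed
qed


lemma pushforward_le:
  fixes f g :: "'a::euclidean_space \<Rightarrow> 'a"
  assumes gf: "\<And>x. g (f x) = x" and fg: "\<And>y. f (g y) = y" and contg: "continuous_on UNIV g"
    and lip: "\<And>x y. norm (f x - f y) \<le> L * norm (x - y)" and L: "0 < L"
    and G: "G \<in> borel_measurable lborel"
  shows "(\<integral>\<^sup>+y. G (g y) \<partial>lborel) \<le> ennreal (L ^ DIM('a)) * (\<integral>\<^sup>+x. G x \<partial>lborel)"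
proof -
  have gm: "g \<in> measurable lborel lborel"
    using borel_measurable_continuous_onI[OF contg] by simp
  have le: "distr lborel lborel g \<le> scale_measure (ennreal (L ^ DIM('a))) lborel"
    unfolding le_measure_iff
  proof (simp add: space_scale_measure le_fun_def, intro allI)
    fix A :: "'a set"
    show "emeasure (distr lborel lborel g) A \<le> ennreal (L ^ DIM('a)) * emeasure lborel A"
    proof (cases "A \<in> sets lborel")
      case False
      then show ?thesis by (simp add: emeasure_notin_sets)
    next
      case True
      have pre: "g -` A \<inter> space lborel = f ` A"
      proof (rule set_eqI)
        fix x show "x \<in> g -` A \<inter> space lborel \<longleftrightarrow> x \<in> f ` A"
        proof
          assume "x \<in> g -` A \<inter> space lborel"
          then have "g x \<in> A" by simp
          then show "x \<in> f ` A" using fg[of x] by (metis image_eqI)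
        next
          assume "x \<in> f ` A"
          then obtain a where "a \<in> A" "x = f a" by blast
          then show "x \<in> g -` A \<inter> space lborel" using gf by simp
        qed
      qed
      have fAm: "f ` A \<in> sets lborel"
        using measurable_sets[OF gm True] pre by simp
      have pre': "g -` A = f ` A" using pre by simp
      have "emeasure (distr lborel lborel g) A = emeasure lborel (f ` A)"
        using True gm by (simp add: emeasure_distr pre')
      also have "\<dots> = emeasure lebesgue (f ` A)" using fAm by simp
      also have "\<dots> \<le> ennreal (L ^ DIM('a)) * emeasure lebesgue A"
        using True by (intro lip_image_emeasure[OF lip L]) simp
      also have "\<dots> = ennreal (L ^ DIM('a)) * emeasure lborel A" using True by simp
      finally show ?thesis .
    qed
  qed
  have "(\<integral>\<^sup>+y. G (g y) \<partial>lborel) = (\<integral>\<^sup>+x. G x \<partial>distr lborel lborel g)"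
    using gm G by (subst nn_integral_distr) auto
  also have "\<dots> \<le> (\<integral>\<^sup>+x. G x \<partial>scale_measure (ennreal (L ^ DIM('a))) lborel)"
    by (rule nn_integral_mono_measure[OF _ le]) simp
  also have "\<dots> = ennreal (L ^ DIM('a)) * (\<integral>\<^sup>+x. G x \<partial>lborel)"
    using G by (rule nn_integral_scale_measure)
  finally show ?thesis .
qed

lemma local_energy:
  fixes E0 :: "'a::euclidean_space set"
  assumes E0[measurable]: "E0 \<in> sets borel" and R: "0 < R" and \<alpha>: "0 < \<alpha>"
  shows "(\<integral>\<^sup>+x. \<integral>\<^sup>+p. ennreal ((if dist x p < R then 1 else 0) * \<bar>indicator E0 x - indicator E0 p\<bar>) \<partial>lborel \<partial>lborel)
    \<le> ennreal (R powr (real DIM('a) + \<alpha>)) *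
      (\<integral>\<^sup>+x. \<integral>\<^sup>+p. ennreal (\<bar>indicator E0 x - indicator E0 p\<bar> / norm (x - p) powr (real DIM('a) + \<alpha>)) \<partial>lborel \<partial>lborel)"
proof -
  define s where "s = real DIM('a) + \<alpha>"
  have s: "0 < s" using \<alpha> by (simp add: s_def add_nonneg_pos)
  define c where "c = R powr s"
  have c: "0 \<le> c" by (simp add: c_def)
  define h where "h x p = ennreal (\<bar>indicator E0 x - indicator E0 p\<bar> / norm (x - p) powr s)" for x p :: 'a
  have hm[measurable]: "(\<lambda>(x, p). h x p) \<in> borel_measurable (lborel \<Otimes>\<^sub>M lborel)"
    unfolding h_def by measurable
  have hm1[measurable]: "h x \<in> borel_measurable lborel" for x
    unfolding h_def by measurable
  have pt: "ennreal ((if dist x p < R then 1 else 0) * \<bar>indicator E0 x - indicator E0 p\<bar>) \<le> ennreal c * h x p" for x p :: 'a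
  proof -
    have r: "(if dist x p < R then 1 else 0) * \<bar>indicator E0 x - indicator E0 p\<bar>
        \<le> c * (\<bar>indicator E0 x - indicator E0 p\<bar> / norm (x - p) powr s)"
    proof (cases "dist x p < R \<and> x \<noteq> p")
      case True
      then have n: "0 < norm (x - p)" "norm (x - p) < R" by (auto simp: dist_norm)
      have "norm (x - p) powr s \<le> R powr s" using n s by (intro powr_mono2) auto
      moreover have "0 < norm (x - p) powr s" using n by simp
      ultimately have "1 \<le> c / norm (x - p) powr s" by (simp add: c_def)
      then have "\<bar>indicator E0 x - indicator E0 p\<bar> * 1 \<le> \<bar>indicator E0 x - indicator E0 p\<bar> * (c / norm (x - p) powr s)"
        by (intro mult_left_mono) auto
      then show ?thesis using True by (simp add: mult.commute)
    next
      case False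
      then show ?thesis using c by (auto intro!: mult_nonneg_nonneg divide_nonneg_nonneg)
    qed
    have "ennreal ((if dist x p < R then 1 else 0) * \<bar>indicator E0 x - indicator E0 p\<bar>)
        \<le> ennreal (c * (\<bar>indicator E0 x - indicator E0 p\<bar> / norm (x - p) powr s))"
      using r by (rule ennreal_leI)
    also have "\<dots> = ennreal c * h x p" unfolding h_def by (rule ennreal_mult) (use c in auto)
    finally show ?thesis .
  qed
  have "(\<integral>\<^sup>+x. \<integral>\<^sup>+p. ennreal ((if dist x p < R then 1 else 0) * \<bar>indicator E0 x - indicator E0 p\<bar>) \<partial>lborel \<partial>lborel)
      \<le> (\<integral>\<^sup>+x. ennreal c * (\<integral>\<^sup>+p. h x p \<partial>lborel) \<partial>lborel)"
  proof (rule nn_integral_mono)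
    fix x :: 'a
    have "(\<integral>\<^sup>+p. ennreal ((if dist x p < R then 1 else 0) * \<bar>indicator E0 x - indicator E0 p\<bar>) \<partial>lborel)
        \<le> (\<integral>\<^sup>+p. ennreal c * h x p \<partial>lborel)" by (rule nn_integral_mono) (rule pt)
    also have "\<dots> = ennreal c * (\<integral>\<^sup>+p. h x p \<partial>lborel)" by (rule nn_integral_cmult) measurable
    finally show "(\<integral>\<^sup>+p. ennreal ((if dist x p < R then 1 else 0) * \<bar>indicator E0 x - indicator E0 p\<bar>) \<partial>lborel)
        \<le> ennreal c * (\<integral>\<^sup>+p. h x p \<partial>lborel)" .
  qed
  also have "\<dots> = ennreal c * (\<integral>\<^sup>+x. \<integral>\<^sup>+p. h x p \<partial>lborel \<partial>lborel)"
    by (rule nn_integral_cmult) measurable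
  finally show ?thesis unfolding c_def h_def s_def .
qed

lemma core_bound:
  fixes f g :: "'a::euclidean_space \<Rightarrow> 'a" and E0 :: "'a set"
  assumes E0[measurable]: "E0 \<in> sets borel"
    and gf: "\<And>x. g (f x) = x" and fg: "\<And>y. f (g y) = y" and contg: "continuous_on UNIV g"
    and lip: "\<And>x y. norm (f x - f y) \<le> L * norm (x - y)" and L: "0 < L"
    and disp: "\<And>y. dist (g y) y \<le> r" and r: "0 < r" and \<alpha>: "0 < \<alpha>"
  shows "ennreal (r ^ DIM('a) * measure lebesgue (ball (0::'a) 1)) * emeasure lborel {y. (g y \<in> E0) \<noteq> (y \<in> E0)}
     \<le> ennreal (L ^ DIM('a) * (2*r) powr (real DIM('a) + \<alpha>) + r powr (real DIM('a) + \<alpha>)) *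
      (\<integral>\<^sup>+x. \<integral>\<^sup>+p. ennreal (\<bar>indicator E0 x - indicator E0 p\<bar> / norm (x - p) powr (real DIM('a) + \<alpha>)) \<partial>lborel \<partial>lborel)"
proof -
  define s where "s = real DIM('a) + \<alpha>"
  define P where "P = (\<integral>\<^sup>+x. \<integral>\<^sup>+p. ennreal (\<bar>indicator E0 x - indicator E0 p\<bar> / norm (x - p) powr s) \<partial>lborel \<partial>lborel)"
  define w where "w = measure lebesgue (ball (0::'a) 1)"
  define u where "u = (indicator E0 :: 'a \<Rightarrow> real)"
  have um[measurable]: "u \<in> borel_measurable borel" unfolding u_def by measurable
  have u01: "u x = 0 \<or> u x = 1" for x unfolding u_def by (simp add: indicator_def)
  define chi where "chi R x p = (if dist x p < R then 1 else 0 :: real)" for R and x p :: 'a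
  define T1 where "T1 y = (\<integral>\<^sup>+p. ennreal (chi r y p * \<bar>u (g y) - u p\<bar>) \<partial>lborel)" for y
  define T2 where "T2 y = (\<integral>\<^sup>+p. ennreal (chi r y p * \<bar>u y - u p\<bar>) \<partial>lborel)" for y
  define G where "G x = (\<integral>\<^sup>+p. ennreal (chi (2*r) x p * \<bar>u x - u p\<bar>) \<partial>lborel)" for x
  have gm[measurable]: "g \<in> borel_measurable borel" by (rule borel_measurable_continuous_onI[OF contg])
  have T1m[measurable]: "T1 \<in> borel_measurable lborel" unfolding T1_def chi_def by measurable
  have T2m[measurable]: "T2 \<in> borel_measurable lborel" unfolding T2_def chi_def by measurable
  have Gm[measurable]: "G \<in> borel_measurable lborel" unfolding G_def chi_def by measurable
  define D where "D = {y. (g y \<in> E0) \<noteq> (y \<in> E0)}"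
  have Dm[measurable]: "D \<in> sets lborel" unfolding D_def by measurable
  have w: "emeasure lebesgue (ball (0::'a) 1) = ennreal w"
    unfolding w_def using emeasure_lborel_ball_finite[of "0::'a" 1]
    by (subst emeasure_eq_ennreal_measure) auto
  have ballm: "(\<integral>\<^sup>+p. ennreal (chi r y p) \<partial>lborel) = ennreal (r ^ DIM('a) * w)" for y
  proof -
    have "(\<integral>\<^sup>+p. ennreal (chi r y p) \<partial>lborel) = (\<integral>\<^sup>+p. indicator (ball y r) p \<partial>lborel)"
      by (intro nn_integral_cong) (simp add: chi_def indicator_def)
    also have "\<dots> = emeasure lborel (ball y r)" by simp
    also have "\<dots> = emeasure lebesgue (ball y r)" by simp
    also have "\<dots> = ennreal (r ^ DIM('a)) * emeasure lebesgue (ball (0::'a) 1)"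
      using r by (intro emeasure_lebesgue_ball_conv_unit_ball) simp
    also have "\<dots> = ennreal (r ^ DIM('a) * w)" using r w_def
      by (simp add: w ennreal_mult)
    finally show ?thesis .
  qed
  have pt: "ennreal (r ^ DIM('a) * w) * indicator D y \<le> T1 y + T2 y" for y
  proof (cases "y \<in> D")
    case False then show ?thesis by simp
  next
    case True
    then have one: "\<bar>u (g y) - u y\<bar> = 1" unfolding D_def u_def by (auto simp: indicator_def)
    have "ennreal (r ^ DIM('a) * w) = (\<integral>\<^sup>+p. ennreal (chi r y p) \<partial>lborel)" by (rule ballm[symmetric])
    also have "\<dots> \<le> (\<integral>\<^sup>+p. ennreal (chi r y p * \<bar>u (g y) - u p\<bar>) + ennreal (chi r y p * \<bar>u y - u p\<bar>) \<partial>lborel)"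
    proof (rule nn_integral_mono)
      fix p
      have "chi r y p \<le> chi r y p * \<bar>u (g y) - u p\<bar> + chi r y p * \<bar>u y - u p\<bar>"
      proof -
        have "1 \<le> \<bar>u (g y) - u p\<bar> + \<bar>u y - u p\<bar>" using one by linarith
        then have "chi r y p * 1 \<le> chi r y p * (\<bar>u (g y) - u p\<bar> + \<bar>u y - u p\<bar>)"
          by (intro mult_left_mono) (auto simp: chi_def)
        then show ?thesis by (simp add: distrib_left)
      qed
      then have "ennreal (chi r y p) \<le> ennreal (chi r y p * \<bar>u (g y) - u p\<bar> + chi r y p * \<bar>u y - u p\<bar>)"
        by (rule ennreal_leI)
      also have "\<dots> = ennreal (chi r y p * \<bar>u (g y) - u p\<bar>) + ennreal (chi r y p * \<bar>u y - u p\<bar>)"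
        by (rule ennreal_plus) (auto simp: chi_def)
      finally show "ennreal (chi r y p) \<le> ennreal (chi r y p * \<bar>u (g y) - u p\<bar>) + ennreal (chi r y p * \<bar>u y - u p\<bar>)" .
    qed
    also have "\<dots> = T1 y + T2 y" unfolding T1_def T2_def
      by (rule nn_integral_add) (simp_all add: chi_def)
    finally show ?thesis using True by simp
  qed
  have T1G: "T1 y \<le> G (g y)" for y
    unfolding T1_def G_def
  proof (rule nn_integral_mono)
    fix p
    have "chi r y p \<le> chi (2*r) (g y) p"
    proof (cases "dist y p < r")
      case True
      have "dist (g y) p \<le> dist (g y) y + dist y p" by (rule dist_triangle)
      then have "dist (g y) p < 2*r" using True disp[of y] by linarith
      then show ?thesis using True by (simp add: chi_def)
    qed (simp add: chi_def)
    then show "ennreal (chi r y p * \<bar>u (g y) - u p\<bar>) \<le> ennreal (chi (2*r) (g y) p * \<bar>u (g y) - u p\<bar>)"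
      by (intro ennreal_leI mult_right_mono) auto
  qed
  have E1: "(\<integral>\<^sup>+x. G x \<partial>lborel) \<le> ennreal ((2*r) powr s) * P"
    unfolding G_def P_def chi_def u_def s_def using r \<alpha> by (intro local_energy) auto
  have E2: "(\<integral>\<^sup>+x. T2 x \<partial>lborel) \<le> ennreal (r powr s) * P"
    unfolding T2_def P_def chi_def u_def s_def using r \<alpha> by (intro local_energy) auto
  have "ennreal (r ^ DIM('a) * w) * emeasure lborel D = (\<integral>\<^sup>+y. ennreal (r ^ DIM('a) * w) * indicator D y \<partial>lborel)"
    using Dm by (rule nn_integral_cmult_indicator[symmetric])
  also have "\<dots> \<le> (\<integral>\<^sup>+y. T1 y + T2 y \<partial>lborel)" by (rule nn_integral_mono) (rule pt)
  also have "\<dots> = (\<integral>\<^sup>+y. T1 y \<partial>lborel) + (\<integral>\<^sup>+y. T2 y \<partial>lborel)" by (rule nn_integral_add) auto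
  also have "(\<integral>\<^sup>+y. T1 y \<partial>lborel) \<le> (\<integral>\<^sup>+y. G (g y) \<partial>lborel)" by (rule nn_integral_mono) (rule T1G)
  also have "\<dots> \<le> ennreal (L ^ DIM('a)) * (\<integral>\<^sup>+x. G x \<partial>lborel)"
    by (rule pushforward_le[OF gf fg contg lip L Gm])
  also have "\<dots> \<le> ennreal (L ^ DIM('a)) * (ennreal ((2*r) powr s) * P)"
    by (rule mult_left_mono[OF E1]) simp
  also note E2
  also have "ennreal (L ^ DIM('a)) * (ennreal ((2*r) powr s) * P) + ennreal (r powr s) * P
      = ennreal (L ^ DIM('a) * (2*r) powr s + r powr s) * P"
    using L by (simp add: ennreal_mult ennreal_plus distrib_right mult.assoc)
  finally show ?thesis unfolding D_def P_def w_def s_def by simp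
qed

lemma Cc_bounds:
  fixes \<phi> :: "'a::euclidean_space \<Rightarrow> 'a"
  assumes "Cc_infty \<Omega> \<phi>"
  shows "\<exists>M>0. \<forall>x. norm (\<phi> x) \<le> M"
    and "\<exists>Lp\<ge>0. \<forall>x y. norm (\<phi> x - \<phi> y) \<le> Lp * norm (x - y)"
proof -
  define K0 where "K0 = closure {x. \<phi> x \<noteq> 0}"
  have sm: "smooth_on UNIV \<phi>" and K0: "compact K0" using assms by (auto simp: Cc_infty_def K0_def)
  have c0: "continuous_on UNIV \<phi>" using sm unfolding smooth_on_def by (metis Ck_on.simps(1))
  have c1: "Ck_on UNIV (Suc 0) \<phi>" using sm unfolding smooth_on_def by blast
  then have diff: "\<And>x. \<phi> differentiable (at x)"
    and cD: "\<And>v. continuous_on UNIV (\<lambda>x. frechet_derivative \<phi> (at x) v)" by auto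
  have zero: "\<phi> x = 0" if "x \<notin> K0" for x
  proof (rule ccontr)
    assume "\<phi> x \<noteq> 0"
    then have "x \<in> {x. \<phi> x \<noteq> 0}" by simp
    then have "x \<in> K0" unfolding K0_def by (rule subsetD[OF closure_subset])
    then show False using that by simp
  qed
  show "\<exists>M>0. \<forall>x. norm (\<phi> x) \<le> M"
  proof -
    have "bounded (\<phi> ` K0)"
      using K0 c0 by (intro compact_imp_bounded compact_continuous_image) (auto intro: continuous_on_subset)
    then obtain B where B: "\<And>y. y \<in> \<phi> ` K0 \<Longrightarrow> norm y \<le> B" by (auto simp: bounded_iff)
    have "norm (\<phi> x) \<le> max B 0 + 1" for x
      using B[of "\<phi> x"] zero[of x] by (cases "x \<in> K0") auto
    then show ?thesis by (intro exI[of _ "max B 0 + 1"]) auto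
  qed
  define D where "D x = frechet_derivative \<phi> (at x)" for x
  have hD: "(\<phi> has_derivative D x) (at x)" for x
    using diff[of x] unfolding D_def by (simp add: frechet_derivative_works)
  have Dz: "D x v = 0" if "x \<notin> K0" for x v
  proof -
    have o: "open (- K0)" using K0 by (simp add: compact_imp_closed open_Compl)
    have "((\<lambda>_. 0::'a) has_derivative (\<lambda>_. 0)) (at x)" by simp
    then have "(\<phi> has_derivative (\<lambda>_. 0)) (at x)"
      by (rule has_derivative_transform_within_open[OF _ o]) (use that zero in auto)
    then have "(\<lambda>_. 0) = D x" using hD[of x] by (rule has_derivative_unique)
    then show ?thesis by (metis)
  qed
  have "\<forall>b\<in>Basis. \<exists>C. \<forall>x. norm (D x b) \<le> C"
  proof
    fix b :: 'a assume "b \<in> Basis"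
    have "continuous_on K0 (\<lambda>x. D x b)" using cD[of b] unfolding D_def by (auto intro: continuous_on_subset)
    then have "bounded ((\<lambda>x. D x b) ` K0)"
      using K0 by (intro compact_imp_bounded compact_continuous_image)
    then obtain B where B: "\<And>y. y \<in> (\<lambda>x. D x b) ` K0 \<Longrightarrow> norm y \<le> B" by (auto simp: bounded_iff)
    have "norm (D x b) \<le> max B 0" for x
      using B[of "D x b"] Dz[of x b] by (cases "x \<in> K0") auto
    then show "\<exists>C. \<forall>x. norm (D x b) \<le> C" by blast
  qed
  then obtain Cf where Cf: "\<And>b x. b \<in> Basis \<Longrightarrow> norm (D x b) \<le> Cf b" by metis
  define Lp where "Lp = (\<Sum>b\<in>Basis. Cf b)"
  have Lp0: "0 \<le> Lp" unfolding Lp_def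
    by (intro sum_nonneg) (meson Cf norm_ge_zero order_trans)
  have Dbound: "norm (D x v) \<le> Lp * norm v" for x v
  proof -
    have lin: "linear (D x)" using hD[of x] by (simp add: has_derivative_linear)
    have "D x v = D x (\<Sum>b\<in>Basis. (v \<bullet> b) *\<^sub>R b)" by (simp add: euclidean_representation)
    also have "\<dots> = (\<Sum>b\<in>Basis. (v \<bullet> b) *\<^sub>R D x b)"
      using lin by (simp add: linear_sum linear_scale)
    finally have "norm (D x v) = norm (\<Sum>b\<in>Basis. (v \<bullet> b) *\<^sub>R D x b)" by (simp only:)
    also have "\<dots> \<le> (\<Sum>b\<in>Basis. norm ((v \<bullet> b) *\<^sub>R D x b))"
      by (rule norm_sum)
    also have "\<dots> \<le> (\<Sum>b\<in>Basis. norm v * Cf b)"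
    proof (intro sum_mono)
      fix b :: 'a assume b: "b \<in> Basis"
      have "norm ((v \<bullet> b) *\<^sub>R D x b) = \<bar>v \<bullet> b\<bar> * norm (D x b)" by simp
      also have "\<dots> \<le> norm v * Cf b"
        using Basis_le_norm[OF b, of v] Cf[OF b, of x] by (intro mult_mono) auto
      finally show "norm ((v \<bullet> b) *\<^sub>R D x b) \<le> norm v * Cf b" .
    qed
    also have "\<dots> = Lp * norm v" by (simp add: Lp_def sum_distrib_left mult.commute)
    finally show ?thesis .
  qed
  have "Lp-lipschitz_on UNIV \<phi>"
  proof (rule bounded_derivative_imp_lipschitz)
    show "(\<phi> has_derivative D x) (at x within UNIV)" for x using hD[of x] by simp
    show "onorm (D x) \<le> Lp" if "x \<in> UNIV" for x
      by (rule onorm_le) (rule Dbound)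
  qed (use Lp0 in auto)
  then have "norm (\<phi> x - \<phi> y) \<le> Lp * norm (x - y)" for x y
    using lipschitz_onD[of Lp UNIV \<phi> x y] by (simp add: dist_norm)
  then show "\<exists>Lp\<ge>0. \<forall>x y. norm (\<phi> x - \<phi> y) \<le> Lp * norm (x - y)" using Lp0 by blast
qed

lemma fsigma_borel: "fsigma C \<Longrightarrow> C \<in> sets borel"
  by (induct rule: fsigma.induct) (auto intro: borel_closed)

lemma main_t:
  fixes \<phi> f :: "'a::euclidean_space \<Rightarrow> 'a" and E :: "'a set"
  assumes f_def: "f = (\<lambda>x. x + t *\<^sub>R \<phi> x)" and bij: "bij f"
    and contg: "continuous_on UNIV (inv f)"
    and M: "\<And>x. norm (\<phi> x) \<le> M" and M0: "0 < M"
    and lipf: "\<And>x y. norm (f x - f y) \<le> Lf * norm (x - y)" and Lf: "0 < Lf"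
    and t: "t \<noteq> 0" and \<alpha>: "0 < \<alpha>"
    and E: "E \<in> sets lebesgue" and Pfin: "frac_perimeter \<alpha> E < \<infinity>"
  shows "f ` E \<in> sets lebesgue"
    and "measure lebesgue ((f ` E - E) \<union> (E - f ` E)) \<le>
      ((Lf ^ DIM('a) * 2 powr (real DIM('a) + \<alpha>) + 1) * M powr \<alpha> / measure lebesgue (ball (0::'a) 1))
        * \<bar>t\<bar> powr \<alpha> * enn2real (frac_perimeter \<alpha> E)"
proof -
  define g where "g = inv f"
  have gf: "g (f x) = x" for x unfolding g_def using bij by (simp add: bij_is_inj)
  have fg: "f (g y) = y" for y unfolding g_def using bij by (simp add: bij_is_surj surj_f_inv_f)
  have contg': "continuous_on UNIV g" using contg by (simp add: g_def)
  have gm[measurable]: "g \<in> borel_measurable borel" by (rule borel_measurable_continuous_onI[OF contg'])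
  define r where "r = \<bar>t\<bar> * M"
  have r: "0 < r" using t M0 by (simp add: r_def)
  have disp: "dist (g y) y \<le> r" for y
  proof -
    have "y = g y + t *\<^sub>R \<phi> (g y)" using fg[of y] by (simp add: f_def)
    then have "g y - y = - (t *\<^sub>R \<phi> (g y))" by (metis add_diff_cancel_left' minus_diff_eq)
    then have "dist (g y) y = \<bar>t\<bar> * norm (\<phi> (g y))" by (simp add: dist_norm)
    also have "\<dots> \<le> \<bar>t\<bar> * M" by (intro mult_left_mono M) simp
    finally show ?thesis by (simp add: r_def)
  qed
  obtain C N where C: "fsigma C" and N: "N \<in> null_sets lebesgue" and CN: "C \<union> N = E" and dCN: "disjnt C N"
    using lebesgue_set_almost_fsigma[OF E] by blast
  have Cm[measurable]: "C \<in> sets borel" using C by (rule fsigma_borel)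
  have fN: "f ` N \<in> null_sets lebesgue"
  proof -
    have "negligible (f ` N)"
    proof (rule negligible_locally_Lipschitz_image)
      show "DIM('a) \<le> DIM('a)" by simp
      show "negligible N" using N by (simp add: negligible_iff_null_sets)
      fix x assume "x \<in> N"
      show "\<exists>T B. open T \<and> x \<in> T \<and> (\<forall>y\<in>N \<inter> T. norm (f y - f x) \<le> B * norm (y - x))"
        using lipf by (intro exI[of _ UNIV] exI[of _ Lf]) auto
    qed
    then show ?thesis by (simp add: negligible_iff_null_sets)
  qed
  have fE: "f ` E = g -` C \<union> f ` N"
  proof (rule set_eqI)
    fix y show "y \<in> f ` E \<longleftrightarrow> y \<in> g -` C \<union> f ` N"
    proof
      assume "y \<in> f ` E"
      then obtain x where x: "x \<in> E" "y = f x" by blast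
      then show "y \<in> g -` C \<union> f ` N" using CN gf by auto
    next
      assume "y \<in> g -` C \<union> f ` N"
      then show "y \<in> f ` E"
      proof
        assume "y \<in> g -` C"
        then have "g y \<in> E" using CN by auto
        then show ?thesis using fg[of y] by (metis image_eqI)
      next
        assume "y \<in> f ` N" then show ?thesis using CN by auto
      qed
    qed
  qed
  have gCm: "g -` C \<in> sets lebesgue"
  proof -
    have "g -` C \<in> sets borel" using measurable_sets[OF gm Cm] by simp
    then show ?thesis by simp
  qed
  show fEm: "f ` E \<in> sets lebesgue" unfolding fE using gCm fN by auto
  define D0 where "D0 = {y. (g y \<in> C) \<noteq> (y \<in> C)}"
  have D0m: "D0 \<in> sets lborel" unfolding D0_def by measurable
  define s where "s = real DIM('a) + \<alpha>"
  define w where "w = measure lebesgue (ball (0::'a) 1)"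
  have w: "0 < w" unfolding w_def by simp
  define P where "P = frac_perimeter \<alpha> E"
  have PC: "P = (\<integral>\<^sup>+x. \<integral>\<^sup>+p. ennreal (\<bar>indicator C x - indicator C p\<bar> / norm (x - p) powr s) \<partial>lborel \<partial>lborel)"
  proof -
    have "P = (\<integral>\<^sup>+x. \<integral>\<^sup>+p. ennreal (\<bar>indicator E x - indicator E p\<bar> / norm (x - p) powr s) \<partial>lebesgue \<partial>lebesgue)"
      unfolding P_def frac_perimeter_def s_def ..
    also have "\<dots> = (\<integral>\<^sup>+x. \<integral>\<^sup>+p. ennreal (\<bar>indicator C x - indicator C p\<bar> / norm (x - p) powr s) \<partial>lebesgue \<partial>lebesgue)"
    proof (rule nn_integral_cong_AE)
      have "AE x in lebesgue. x \<notin> N" using N by (rule AE_not_in)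
      then show "AE x in lebesgue. (\<integral>\<^sup>+p. ennreal (\<bar>indicator E x - indicator E p\<bar> / norm (x - p) powr s) \<partial>lebesgue)
          = (\<integral>\<^sup>+p. ennreal (\<bar>indicator C x - indicator C p\<bar> / norm (x - p) powr s) \<partial>lebesgue)"
      proof (rule AE_mp, intro AE_I2 impI)
        fix x assume xN: "x \<notin> N"
        have ix: "indicator E x = (indicator C x :: real)" using xN CN by (auto simp: indicator_def)
        show "(\<integral>\<^sup>+p. ennreal (\<bar>indicator E x - indicator E p\<bar> / norm (x - p) powr s) \<partial>lebesgue)
          = (\<integral>\<^sup>+p. ennreal (\<bar>indicator C x - indicator C p\<bar> / norm (x - p) powr s) \<partial>lebesgue)"
        proof (rule nn_integral_cong_AE)
          have "AE p in lebesgue. p \<notin> N" using N by (rule AE_not_in)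
          then show "AE p in lebesgue. ennreal (\<bar>indicator E x - indicator E p\<bar> / norm (x - p) powr s)
              = ennreal (\<bar>indicator C x - indicator C p\<bar> / norm (x - p) powr s)"
          proof (rule AE_mp, intro AE_I2 impI)
            fix p assume pN: "p \<notin> N"
            have "indicator E p = (indicator C p :: real)" using pN CN by (auto simp: indicator_def)
            then show "ennreal (\<bar>indicator E x - indicator E p\<bar> / norm (x - p) powr s)
              = ennreal (\<bar>indicator C x - indicator C p\<bar> / norm (x - p) powr s)" using ix by simp
          qed
        qed
      qed
    qed
    also have "\<dots> = (\<integral>\<^sup>+x. \<integral>\<^sup>+p. ennreal (\<bar>indicator C x - indicator C p\<bar> / norm (x - p) powr s) \<partial>lborel \<partial>lborel)"
      by (simp only: nn_integral_completion)
    finally show ?thesis .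
  qed
  have core: "ennreal (r ^ DIM('a) * w) * emeasure lborel D0
     \<le> ennreal (Lf ^ DIM('a) * (2*r) powr s + r powr s) * P"
    unfolding PC D0_def w_def s_def
    by (rule core_bound[OF Cm gf fg contg' lipf Lf disp r \<alpha>])
  define p where "p = enn2real P"
  have P: "P = ennreal p" using Pfin unfolding p_def P_def by simp
  have p0: "0 \<le> p" unfolding p_def by simp
  define K where "K = Lf ^ DIM('a) * (2*r) powr s + r powr s"
  have K0: "0 \<le> K" unfolding K_def using Lf by simp
  have rdw: "0 < r ^ DIM('a) * w" using r w by simp
  have fin: "emeasure lborel D0 < \<infinity>"
  proof -
    have "emeasure lborel D0 \<noteq> \<infinity>"
    proof
      assume inf: "emeasure lborel D0 = \<infinity>"
      then have "ennreal (r ^ DIM('a) * w) * emeasure lborel D0 = \<infinity>" using rdw r w by (simp add: ennreal_mult_top)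
      then show False using core K0 p0 unfolding P K_def[symmetric] by (simp add: ennreal_mult[symmetric] top_unique)
    qed
    then show ?thesis by (simp add: less_top)
  qed
  define e0 where "e0 = enn2real (emeasure lborel D0)"
  have De0: "emeasure lborel D0 = ennreal e0" using fin unfolding e0_def by simp
  have e00: "0 \<le> e0" unfolding e0_def by simp
  have "ennreal (r ^ DIM('a) * w * e0) \<le> ennreal (K * p)"
    using core unfolding P De0 K_def[symmetric] using rdw e00 K0 p0
    by (simp add: ennreal_mult[symmetric])
  then have "r ^ DIM('a) * w * e0 \<le> K * p" using K0 p0 by (simp add: ennreal_le_iff)
  then have e0le: "e0 \<le> K * p / (r ^ DIM('a) * w)" using rdw by (simp add: field_simps)
  have Keq: "K * p / (r ^ DIM('a) * w) =
      ((Lf ^ DIM('a) * 2 powr s + 1) * M powr \<alpha> / w) * \<bar>t\<bar> powr \<alpha> * p"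
  proof -
    have rs: "r powr s = r ^ DIM('a) * r powr \<alpha>" using r by (simp add: s_def powr_add powr_realpow)
    have r2: "(2*r) powr s = 2 powr s * r powr s" using r by (simp add: powr_mult)
    have ra: "r powr \<alpha> = \<bar>t\<bar> powr \<alpha> * M powr \<alpha>" using M0 by (simp add: r_def powr_mult)
    have "K = (Lf ^ DIM('a) * 2 powr s + 1) * r ^ DIM('a) * r powr \<alpha>"
      unfolding K_def r2 rs by (simp add: algebra_simps)
    then show ?thesis using rdw r w by (simp add: ra field_simps)
  qed
  define DE where "DE = (f ` E - E) \<union> (E - f ` E)"
  have Dsub: "DE \<subseteq> D0 \<union> (N \<union> f ` N)"
  proof
    fix y assume y: "y \<in> DE"
    show "y \<in> D0 \<union> (N \<union> f ` N)"
    proof (cases "y \<in> f ` E")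
      case True
      then obtain x where x: "x \<in> E" "y = f x" by blast
      have yE: "y \<notin> E" using y True by (auto simp: DE_def)
      show ?thesis
      proof (cases "x \<in> N")
        case False
        then have "x \<in> C" using x CN by auto
        then have "g y \<in> C" "y \<notin> C" using x gf yE CN by auto
        then show ?thesis by (auto simp: D0_def)
      qed (use x in auto)
    next
      case False
      then have yE: "y \<in> E" using y by (auto simp: DE_def)
      have "g y \<notin> E" using False fg[of y] by (metis image_eqI)
      then have gy: "g y \<notin> C" using CN by auto
      show ?thesis
      proof (cases "y \<in> N")
        case False
        then have "y \<in> C" using yE CN by auto
        then show ?thesis using gy by (auto simp: D0_def)
      qed simp
    qed
  qed
  have NfN: "N \<union> f ` N \<in> null_sets lebesgue" using N fN by auto
  have D0l: "D0 \<in> sets lebesgue" using D0m by simp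
  have "emeasure lebesgue DE \<le> emeasure lebesgue (D0 \<union> (N \<union> f ` N))"
    using Dsub D0l NfN by (intro emeasure_mono) auto
  also have "\<dots> = emeasure lebesgue D0" using D0l NfN by (rule emeasure_Un_null_set)
  also have "\<dots> = emeasure lborel D0" using D0m by simp
  finally have "emeasure lebesgue DE \<le> ennreal e0" using De0 by simp
  then have "measure lebesgue DE \<le> e0" unfolding measure_def using e00
    by (metis enn2real_ennreal enn2real_mono ennreal_less_top)
  also have "\<dots> \<le> ((Lf ^ DIM('a) * 2 powr s + 1) * M powr \<alpha> / w) * \<bar>t\<bar> powr \<alpha> * p"
    using e0le Keq by simp
  finally show "measure lebesgue ((f ` E - E) \<union> (E - f ` E)) \<le>
      ((Lf ^ DIM('a) * 2 powr (real DIM('a) + \<alpha>) + 1) * M powr \<alpha> / measure lebesgue (ball (0::'a) 1))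
        * \<bar>t\<bar> powr \<alpha> * enn2real (frac_perimeter \<alpha> E)"
    unfolding DE_def s_def w_def p_def P_def .
qed

theorem lemma2p8:
  fixes \<Omega> :: "'a::euclidean_space set" and \<alpha> \<epsilon> :: real and \<phi> :: "'a \<Rightarrow> 'a"
  assumes "open \<Omega>" and "connected \<Omega>" and "bounded \<Omega>"
    and "0 < \<alpha>" and "\<alpha> < 1"
    and "Cc_infty \<Omega> \<phi>"
    and "local_variation \<epsilon> \<Omega> (\<lambda>t x. x + t *\<^sub>R \<phi> x)"
  shows "\<exists>\<epsilon>0 L. 0 < \<epsilon>0 \<and> \<epsilon>0 < \<epsilon> \<and> 0 < L \<and>
    (\<forall>t E F. \<bar>t\<bar> < \<epsilon>0 \<longrightarrow> E \<in> sets lebesgue \<longrightarrow> F \<in> sets lebesgue \<longrightarrow>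
       E \<subseteq> \<Omega> \<longrightarrow> F \<subseteq> \<Omega> \<longrightarrow> frac_perimeter \<alpha> E < \<infinity> \<longrightarrow>
       \<bar>measure lebesgue ((\<lambda>x. x + t *\<^sub>R \<phi> x) ` E \<inter> F) - measure lebesgue (E \<inter> F)\<bar>
         \<le> L * \<bar>t\<bar> powr \<alpha> * enn2real (frac_perimeter \<alpha> E) \<and>
       measure lebesgue (((\<lambda>x. x + t *\<^sub>R \<phi> x) ` E - E) \<union> (E - (\<lambda>x. x + t *\<^sub>R \<phi> x) ` E))
         \<le> L * \<bar>t\<bar> powr \<alpha> * enn2real (frac_perimeter \<alpha> E))"
  proof -
  have eps: "0 < \<epsilon>" and dif: "\<And>t. t \<in> {-\<epsilon><..<\<epsilon>} \<Longrightarrow> diffeomorphism (\<lambda>x. x + t *\<^sub>R \<phi> x)"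
    using assms(7) unfolding local_variation_def by auto
  obtain M where M0: "0 < M" and M: "\<And>x. norm (\<phi> x) \<le> M" using Cc_bounds(1)[OF assms(6)] by blast
  obtain Lp where Lp0: "0 \<le> Lp" and Lp: "\<And>x y. norm (\<phi> x - \<phi> y) \<le> Lp * norm (x - y)"
    using Cc_bounds(2)[OF assms(6)] by blast
  define Lf where "Lf = 1 + \<epsilon> * Lp"
  have Lf: "0 < Lf" unfolding Lf_def using eps Lp0 by (simp add: add_pos_nonneg)
  define w where "w = measure lebesgue (ball (0::'a) 1)"
  have w: "0 < w" unfolding w_def by simp
  define Lc where "Lc = (Lf ^ DIM('a) * 2 powr (real DIM('a) + \<alpha>) + 1) * M powr \<alpha> / w"
  have Lc: "0 < Lc" unfolding Lc_def using Lf M0 w by (simp add: add_nonneg_pos)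
  obtain Bd where Bd: "\<And>x. x \<in> \<Omega> \<Longrightarrow> norm x \<le> Bd" using assms(3) by (auto simp: bounded_iff)
  show ?thesis
  proof (rule exI[of _ "\<epsilon>/2"], rule exI[of _ Lc], intro conjI)
    show "0 < \<epsilon>/2" using eps by auto
    show "\<epsilon>/2 < \<epsilon>" using eps by auto
    show "0 < Lc" by (rule Lc)
  next
    show "\<forall>t E F. \<bar>t\<bar> < \<epsilon>/2 \<longrightarrow> E \<in> sets lebesgue \<longrightarrow> F \<in> sets lebesgue \<longrightarrow>
       E \<subseteq> \<Omega> \<longrightarrow> F \<subseteq> \<Omega> \<longrightarrow> frac_perimeter \<alpha> E < \<infinity> \<longrightarrow>
       \<bar>measure lebesgue ((\<lambda>x. x + t *\<^sub>R \<phi> x) ` E \<inter> F) - measure lebesgue (E \<inter> F)\<bar>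
         \<le> Lc * \<bar>t\<bar> powr \<alpha> * enn2real (frac_perimeter \<alpha> E) \<and>
       measure lebesgue (((\<lambda>x. x + t *\<^sub>R \<phi> x) ` E - E) \<union> (E - (\<lambda>x. x + t *\<^sub>R \<phi> x) ` E))
         \<le> Lc * \<bar>t\<bar> powr \<alpha> * enn2real (frac_perimeter \<alpha> E)"
  proof (intro allI impI)
    fix t E F
    assume t: "\<bar>t\<bar> < \<epsilon>/2" and Em: "E \<in> sets lebesgue" and Fm: "F \<in> sets lebesgue"
      and EO: "E \<subseteq> \<Omega>" and FO: "F \<subseteq> \<Omega>" and Pfin: "frac_perimeter \<alpha> E < \<infinity>"
    define f where "f = (\<lambda>x. x + t *\<^sub>R \<phi> x)"
    define DE where "DE = (f ` E - E) \<union> (E - f ` E)"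
    have goal: "\<bar>measure lebesgue (f ` E \<inter> F) - measure lebesgue (E \<inter> F)\<bar>
         \<le> Lc * \<bar>t\<bar> powr \<alpha> * enn2real (frac_perimeter \<alpha> E) \<and>
       measure lebesgue DE \<le> Lc * \<bar>t\<bar> powr \<alpha> * enn2real (frac_perimeter \<alpha> E)"
    proof (cases "t = 0")
      case True
      then have "f = (\<lambda>x. x)" by (simp add: f_def)
      then show ?thesis using True assms(4) by (simp add: DE_def)
    next
      case False
      have tin: "t \<in> {-\<epsilon><..<\<epsilon>}" using t by auto
      have dt: "diffeomorphism f" unfolding f_def using dif[OF tin] .
      then have bij: "bij f" and sm: "smooth_on UNIV (inv f)" by (auto simp: diffeomorphism_def)
      have contg: "continuous_on UNIV (inv f)" using sm unfolding smooth_on_def by (metis Ck_on.simps(1))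
      have lipf: "norm (f x - f y) \<le> Lf * norm (x - y)" for x y
      proof -
        have "f x - f y = (x - y) + t *\<^sub>R (\<phi> x - \<phi> y)" by (simp add: f_def algebra_simps)
        then have "norm (f x - f y) \<le> norm (x - y) + \<bar>t\<bar> * norm (\<phi> x - \<phi> y)"
          by (metis norm_scaleR norm_triangle_ineq)
        also have "\<dots> \<le> norm (x - y) + \<epsilon> * (Lp * norm (x - y))"
          using t Lp[of x y] Lp0 by (intro add_left_mono mult_mono) auto
        also have "\<dots> = Lf * norm (x - y)" by (simp add: Lf_def algebra_simps)
        finally show ?thesis .
      qed
      have fEm: "f ` E \<in> sets lebesgue"
        by (rule main_t(1)[OF f_def bij contg M M0 lipf Lf False assms(4) Em Pfin])
      have bnd: "measure lebesgue DE \<le> Lc * \<bar>t\<bar> powr \<alpha> * enn2real (frac_perimeter \<alpha> E)"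
        unfolding DE_def Lc_def w_def
        by (rule main_t(2)[OF f_def bij contg M M0 lipf Lf False assms(4) Em Pfin])
      have bE: "bounded E" using assms(3) EO by (rule bounded_subset)
      have bfE: "bounded (f ` E)"
      proof -
        have "f ` E \<subseteq> cball 0 (Bd + \<bar>t\<bar> * M)"
        proof
          fix y assume "y \<in> f ` E"
          then obtain x where x: "x \<in> E" "y = f x" by blast
          have "norm y \<le> norm x + norm (t *\<^sub>R \<phi> x)" unfolding x(2) f_def by (rule norm_triangle_ineq)
          also have "\<dots> \<le> Bd + \<bar>t\<bar> * M" using Bd[of x] x(1) EO M[of x]
            by (intro add_mono) (auto intro: mult_left_mono)
          finally show "y \<in> cball 0 (Bd + \<bar>t\<bar> * M)" by simp
        qed
        then show ?thesis using bounded_cball bounded_subset by blast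
      qed
      have DEm: "DE \<in> sets lebesgue" unfolding DE_def using fEm Em by auto
      have X: "f ` E \<inter> F \<in> lmeasurable"
        using bfE fEm Fm by (intro bounded_set_imp_lmeasurable) (auto intro: bounded_subset)
      have Y: "E \<inter> F \<in> lmeasurable"
        using bE Em Fm by (intro bounded_set_imp_lmeasurable) (auto intro: bounded_subset)
      have DEl: "DE \<in> lmeasurable"
        using bE bfE DEm unfolding DE_def by (intro bounded_set_imp_lmeasurable) (auto intro: bounded_subset)
      have "measure lebesgue (f ` E \<inter> F) \<le> measure lebesgue ((E \<inter> F) \<union> DE)"
        using X Y DEl by (intro measure_mono_fmeasurable) (auto simp: DE_def)
      also have "\<dots> \<le> measure lebesgue (E \<inter> F) + measure lebesgue DE"
        using Y DEl by (intro measure_Un_le) auto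
      finally have 1: "measure lebesgue (f ` E \<inter> F) \<le> measure lebesgue (E \<inter> F) + measure lebesgue DE" .
      have "measure lebesgue (E \<inter> F) \<le> measure lebesgue ((f ` E \<inter> F) \<union> DE)"
        using X Y DEl by (intro measure_mono_fmeasurable) (auto simp: DE_def)
      also have "\<dots> \<le> measure lebesgue (f ` E \<inter> F) + measure lebesgue DE"
        using X DEl by (intro measure_Un_le) auto
      finally have 2: "measure lebesgue (E \<inter> F) \<le> measure lebesgue (f ` E \<inter> F) + measure lebesgue DE" .
      show ?thesis using 1 2 bnd by linarith
    qed
    then show "\<bar>measure lebesgue ((\<lambda>x. x + t *\<^sub>R \<phi> x) ` E \<inter> F) - measure lebesgue (E \<inter> F)\<bar>
         \<le> Lc * \<bar>t\<bar> powr \<alpha> * enn2real (frac_perimeter \<alpha> E) \<and>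
       measure lebesgue (((\<lambda>x. x + t *\<^sub>R \<phi> x) ` E - E) \<union> (E - (\<lambda>x. x + t *\<^sub>R \<phi> x) ` E))
         \<le> Lc * \<bar>t\<bar> powr \<alpha> * enn2real (frac_perimeter \<alpha> E)"
      unfolding f_def DE_def .
  qed
  qed
qed

end
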